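(* The collection of all simplified three-dimensional copulas is dense in $(\mathcal{C}^3,d_\infty)$.
   Context: $\mathcal{C}^3$ is the set of all three-dimensional copulas and $d_\infty(C_1,C_2)=\max_{\mathbf{x}\in[0,1]^3}|C_1(\mathbf{x})-C_2(\mathbf{x})|$. Write points of $[0,1]^3$ as $(\mathbf{u},v)$, $\mathbf{u}=(u_1,u_2)$, and let $\lambda$ be Lebesgue measure. For $C\in\mathcal{C}^3$, $K_C$ is (a version of) the regular conditional distribution of $(U_1,U_2)$ given $U_3=v$, $(U_1,U_2,U_3)\sim C$; $F_{1|3}(u_1|t)=K_C(t,[0,u_1]\times[0,1])$, $F_{2|3}(u_2|t)=K_C(t,[0,1]\times[0,u_2])$. $C$ is simplified if (i) there is a bivariate copula $A$ with $C(\mathbf{u},v)=\int_{[0,v]}A(F_{1|3}(u_1|t),F_{2|3}(u_2|t))\,d\lambda(t)$ for all $(\mathbf{u},v)$, and (ii) for $\lambda$-a.e. $t$ the functions $F_{1|3}(\cdot|t)$, $F_{2|3}(\cdot|t)$ are continuous. *)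

theory Defs
  imports "HOL-Probability.Probability"
begin

definition copula2 :: "(real \<Rightarrow> real \<Rightarrow> real) \<Rightarrow> bool" where
  "copula2 A \<longleftrightarrow>
     (\<forall>u\<in>{0..1}. A u 0 = 0 \<and> A 0 u = 0 \<and> A u 1 = u \<and> A 1 u = u) \<and>
     (\<forall>a1 b1 a2 b2. 0 \<le> a1 \<and> a1 \<le> b1 \<and> b1 \<le> 1 \<and> 0 \<le> a2 \<and> a2 \<le> b2 \<and> b2 \<le> 1 \<longrightarrow>
        A b1 b2 - A a1 b2 - A b1 a2 + A a1 a2 \<ge> 0)"

definition copula3 :: "(real \<Rightarrow> real \<Rightarrow> real \<Rightarrow> real) \<Rightarrow> bool" where
  "copula3 C \<longleftrightarrow>
     (\<forall>x\<in>{0..1}. \<forall>y\<in>{0..1}. C 0 x y = 0 \<and> C x 0 y = 0 \<and> C x y 0 = 0) \<and>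
     (\<forall>x\<in>{0..1}. C x 1 1 = x \<and> C 1 x 1 = x \<and> C 1 1 x = x) \<and>
     (\<forall>a1 b1 a2 b2 a3 b3. 0 \<le> a1 \<and> a1 \<le> b1 \<and> b1 \<le> 1 \<and> 0 \<le> a2 \<and> a2 \<le> b2 \<and> b2 \<le> 1
        \<and> 0 \<le> a3 \<and> a3 \<le> b3 \<and> b3 \<le> 1 \<longrightarrow>
        C b1 b2 b3 - C a1 b2 b3 - C b1 a2 b3 - C b1 b2 a3
        + C a1 a2 b3 + C a1 b2 a3 + C b1 a2 a3 - C a1 a2 a3 \<ge> 0)"

definition d_inf :: "(real \<Rightarrow> real \<Rightarrow> real \<Rightarrow> real) \<Rightarrow> (real \<Rightarrow> real \<Rightarrow> real \<Rightarrow> real) \<Rightarrow> real" where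
  "d_inf C1 C2 = (SUP x\<in>{0..1} \<times> {0..1} \<times> {0..1}.
      \<bar>C1 (fst x) (fst (snd x)) (snd (snd x)) - C2 (fst x) (fst (snd x)) (snd (snd x))\<bar>)"

text \<open>K is a version of the regular conditional distribution of (U1,U2) given U3 = t,
  for (U1,U2,U3) distributed according to C: a Markov kernel from the real line into
  probability measures on [0,1]^2 whose mixture against Lebesgue measure on [0,v]
  reproduces C on boxes.\<close>
definition cond_kernel :: "(real \<Rightarrow> real \<Rightarrow> real \<Rightarrow> real) \<Rightarrow> (real \<Rightarrow> (real \<times> real) measure) \<Rightarrow> bool" where
  "cond_kernel C K \<longleftrightarrow>
     K \<in> borel \<rightarrow>\<^sub>M prob_algebra borel \<and>
     (\<forall>t. emeasure (K t) ({0..1} \<times> {0..1}) = 1) \<and>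
     (\<forall>u1\<in>{0..1}. \<forall>u2\<in>{0..1}. \<forall>v\<in>{0..1}.
        C u1 u2 v = (LINT t:{0..v}|lborel. measure (K t) ({0..u1} \<times> {0..u2})))"

definition F13 :: "(real \<Rightarrow> (real \<times> real) measure) \<Rightarrow> real \<Rightarrow> real \<Rightarrow> real" where
  "F13 K t u1 = measure (K t) ({0..u1} \<times> {0..1})"

definition F23 :: "(real \<Rightarrow> (real \<times> real) measure) \<Rightarrow> real \<Rightarrow> real \<Rightarrow> real" where
  "F23 K t u2 = measure (K t) ({0..1} \<times> {0..u2})"

definition simplified :: "(real \<Rightarrow> real \<Rightarrow> real \<Rightarrow> real) \<Rightarrow> bool" where
  "simplified C \<longleftrightarrow> (\<exists>K A. cond_kernel C K \<and> copula2 A \<and>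
     (\<forall>u1\<in>{0..1}. \<forall>u2\<in>{0..1}. \<forall>v\<in>{0..1}.
        C u1 u2 v = (LINT t:{0..v}|lborel. A (F13 K t u1) (F23 K t u2))) \<and>
     (AE t in lborel. t \<in> {0..1} \<longrightarrow>
        continuous_on UNIV (F13 K t) \<and> continuous_on UNIV (F23 K t)))"

end

theory Submission
  imports Defs
begin


lemma sum_split_mult: "(\<Sum>q<a*b. f q) = (\<Sum>k<a. \<Sum>r<b. f (k*b + r))" for a b :: nat
proof (induction a)
  case 0 then show ?case by simp
next
  case (Suc a)
  have "{..<Suc a * b} = {..<a*b} \<union> {a*b..<a*b+b}" by auto
  then have "(\<Sum>q<Suc a*b. f q) = (\<Sum>q<a*b. f q) + (\<Sum>q\<in>{a*b..<a*b+b}. f q)"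
    by (simp add: sum.union_disjoint ivl_disj_int)
  also have "(\<Sum>q\<in>{a*b..<a*b+b}. f q) = (\<Sum>r<b. f (a*b + r))"
    proof -
    have "{a*b..<a*b+b} = (+) (a*b) ` {..<b}"
      by (simp add: lessThan_atLeast0 add.commute)
    then show ?thesis by (simp add: sum.reindex)
  qed
  finally show ?case using Suc by simp
qed

lemma sum_if_less: "c \<le> n \<Longrightarrow> (\<Sum>k<n. if k < c then f k else 0) = (\<Sum>k<c. f k)" for c n :: nat
proof -
  assume "c \<le> n"
  then have "{..<n} \<inter> {k. k < c} = {..<c}" by auto
  then show ?thesis by (simp add: sum.If_cases)
qed

lemma sum_clamp: "y \<le> real m \<Longrightarrow> (\<Sum>i<m. max 0 (min 1 (y - real i))) = max 0 y"
proof (induction m arbitrary: y)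
  case 0 then show ?case by simp
next
  case (Suc m)
  have "(\<Sum>i<Suc m. max 0 (min 1 (y - real i))) = max 0 (min 1 y) + (\<Sum>i<m. max 0 (min 1 ((y - 1) - real i)))"
    by (subst sum.lessThan_Suc_shift) (simp add: algebra_simps)
  also have "(\<Sum>i<m. max 0 (min 1 ((y - 1) - real i))) = max 0 (y - 1)"
    using Suc by simp
  finally show ?case by simp
qed


lemma cop_ground: "copula3 C \<Longrightarrow> x \<in> {0..1} \<Longrightarrow> y \<in> {0..1} \<Longrightarrow> C 0 x y = 0 \<and> C x 0 y = 0 \<and> C x y 0 = 0"
  unfolding copula3_def by blast
lemma cop_marg: "copula3 C \<Longrightarrow> x \<in> {0..1} \<Longrightarrow> C x 1 1 = x \<and> C 1 x 1 = x \<and> C 1 1 x = x"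
  unfolding copula3_def by blast
lemma cop_inc: "copula3 C \<Longrightarrow> 0 \<le> a1 \<Longrightarrow> a1 \<le> b1 \<Longrightarrow> b1 \<le> 1 \<Longrightarrow> 0 \<le> a2 \<Longrightarrow> a2 \<le> b2 \<Longrightarrow> b2 \<le> 1
  \<Longrightarrow> 0 \<le> a3 \<Longrightarrow> a3 \<le> b3 \<Longrightarrow> b3 \<le> 1 \<Longrightarrow>
        C b1 b2 b3 - C a1 b2 b3 - C b1 a2 b3 - C b1 b2 a3
        + C a1 a2 b3 + C a1 b2 a3 + C b1 a2 a3 - C a1 a2 a3 \<ge> 0"
  unfolding copula3_def by blast

lemma cop_g1: "copula3 C \<Longrightarrow> x \<in> {0..1} \<Longrightarrow> y \<in> {0..1} \<Longrightarrow> C 0 x y = 0"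
  and cop_g2: "copula3 C \<Longrightarrow> x \<in> {0..1} \<Longrightarrow> y \<in> {0..1} \<Longrightarrow> C x 0 y = 0"
  and cop_g3: "copula3 C \<Longrightarrow> x \<in> {0..1} \<Longrightarrow> y \<in> {0..1} \<Longrightarrow> C x y 0 = 0"
  and cop_m1: "copula3 C \<Longrightarrow> x \<in> {0..1} \<Longrightarrow> C x 1 1 = x"
  and cop_m2: "copula3 C \<Longrightarrow> x \<in> {0..1} \<Longrightarrow> C 1 x 1 = x"
  and cop_m3: "copula3 C \<Longrightarrow> x \<in> {0..1} \<Longrightarrow> C 1 1 x = x"
  unfolding copula3_def by blast+

lemma cop_lip1:
  assumes "copula3 C" "0 \<le> a" "a \<le> b" "b \<le> 1" "y \<in> {0..1}" "z \<in> {0..1}"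
  shows "0 \<le> C b y z - C a y z \<and> C b y z - C a y z \<le> b - a"
proof -
  note inc = cop_inc[OF assms(1)]
  have r: "a \<in> {0..1}" "b \<in> {0..1}" "(0::real) \<in> {0..1}" "(1::real) \<in> {0..1}" using assms by auto
  have 1: "0 \<le> C b y z - C a y z - C b 0 z - C b y 0 + C a 0 z + C a y 0 + C b 0 0 - C a 0 0"
    using inc[of a b 0 y 0 z] assms by auto
  have 2: "0 \<le> C b y 1 - C a y 1 - C b 0 1 - C b y z + C a 0 1 + C a y z + C b 0 z - C a 0 z"
    using inc[of a b 0 y z 1] assms by auto
  have 3: "0 \<le> C b 1 1 - C a 1 1 - C b y 1 - C b 1 0 + C a y 1 + C a 1 0 + C b y 0 - C a y 0"
    using inc[of a b y 1 0 1] assms by auto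
  have z1: "C b 0 z = 0" by (rule cop_g2[OF assms(1) r(2) assms(6)])
  have z2: "C b y 0 = 0" by (rule cop_g3[OF assms(1) r(2) assms(5)])
  have z3: "C a 0 z = 0" by (rule cop_g2[OF assms(1) r(1) assms(6)])
  have z4: "C a y 0 = 0" by (rule cop_g3[OF assms(1) r(1) assms(5)])
  have z5: "C b 0 0 = 0" by (rule cop_g2[OF assms(1) r(2) r(3)])
  have z6: "C a 0 0 = 0" by (rule cop_g2[OF assms(1) r(1) r(3)])
  have z7: "C b 0 1 = 0" by (rule cop_g2[OF assms(1) r(2) r(4)])
  have z8: "C a 0 1 = 0" by (rule cop_g2[OF assms(1) r(1) r(4)])
  have z9: "C b 1 0 = 0" by (rule cop_g3[OF assms(1) r(2) r(4)])
  have z10: "C a 1 0 = 0" by (rule cop_g3[OF assms(1) r(1) r(4)])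
  have z11: "C a 1 1 = a" by (rule cop_m1[OF assms(1) r(1)])
  have z12: "C b 1 1 = b" by (rule cop_m1[OF assms(1) r(2)])
  show ?thesis using 1 2 3 assms z1 z2 z3 z4 z5 z6 z7 z8 z9 z10 z11 z12 by linarith
qed

lemma cop_lip2:
  assumes "copula3 C" "0 \<le> a" "a \<le> b" "b \<le> 1" "x \<in> {0..1}" "z \<in> {0..1}"
  shows "0 \<le> C x b z - C x a z \<and> C x b z - C x a z \<le> b - a"
proof -
  note inc = cop_inc[OF assms(1)]
  have r: "a \<in> {0..1}" "b \<in> {0..1}" "(0::real) \<in> {0..1}" "(1::real) \<in> {0..1}" using assms by auto
  have 1: "0 \<le> C x b z - C 0 b z - C x a z - C x b 0 + C 0 a z + C 0 b 0 + C x a 0 - C 0 a 0"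
    using inc[of 0 x a b 0 z] assms by auto
  have 2: "0 \<le> C x b 1 - C 0 b 1 - C x a 1 - C x b z + C 0 a 1 + C 0 b z + C x a z - C 0 a z"
    using inc[of 0 x a b z 1] assms by auto
  have 3: "0 \<le> C 1 b 1 - C x b 1 - C 1 a 1 - C 1 b 0 + C x a 1 + C x b 0 + C 1 a 0 - C x a 0"
    using inc[of x 1 a b 0 1] assms by auto
  have z13: "C 0 b z = 0" by (rule cop_g1[OF assms(1) r(2) assms(6)])
  have z14: "C x b 0 = 0" by (rule cop_g3[OF assms(1) assms(5) r(2)])
  have z15: "C 0 a z = 0" by (rule cop_g1[OF assms(1) r(1) assms(6)])
  have z16: "C 0 b 0 = 0" by (rule cop_g1[OF assms(1) r(2) r(3)])
  have z17: "C x a 0 = 0" by (rule cop_g3[OF assms(1) assms(5) r(1)])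
  have z18: "C 0 a 0 = 0" by (rule cop_g1[OF assms(1) r(1) r(3)])
  have z19: "C 0 b 1 = 0" by (rule cop_g1[OF assms(1) r(2) r(4)])
  have z20: "C 0 a 1 = 0" by (rule cop_g1[OF assms(1) r(1) r(4)])
  have z21: "C 1 b 0 = 0" by (rule cop_g3[OF assms(1) r(4) r(2)])
  have z22: "C 1 a 0 = 0" by (rule cop_g3[OF assms(1) r(4) r(1)])
  have z23: "C 1 a 1 = a" by (rule cop_m2[OF assms(1) r(1)])
  have z24: "C 1 b 1 = b" by (rule cop_m2[OF assms(1) r(2)])
  show ?thesis using 1 2 3 assms z13 z14 z15 z16 z17 z18 z19 z20 z21 z22 z23 z24 by linarith
qed

lemma cop_lip3:
  assumes "copula3 C" "0 \<le> a" "a \<le> b" "b \<le> 1" "x \<in> {0..1}" "y \<in> {0..1}"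
  shows "0 \<le> C x y b - C x y a \<and> C x y b - C x y a \<le> b - a"
proof -
  note inc = cop_inc[OF assms(1)]
  have r: "a \<in> {0..1}" "b \<in> {0..1}" "(0::real) \<in> {0..1}" "(1::real) \<in> {0..1}" using assms by auto
  have 1: "0 \<le> C x y b - C 0 y b - C x 0 b - C x y a + C 0 0 b + C 0 y a + C x 0 a - C 0 0 a"
    using inc[of 0 x 0 y a b] assms by auto
  have 2: "0 \<le> C x 1 b - C 0 1 b - C x y b - C x 1 a + C 0 y b + C 0 1 a + C x y a - C 0 y a"
    using inc[of 0 x y 1 a b] assms by auto
  have 3: "0 \<le> C 1 1 b - C x 1 b - C 1 0 b - C 1 1 a + C x 0 b + C x 1 a + C 1 0 a - C x 0 a"
    using inc[of x 1 0 1 a b] assms by auto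
  have z25: "C 0 y b = 0" by (rule cop_g1[OF assms(1) assms(6) r(2)])
  have z26: "C x 0 b = 0" by (rule cop_g2[OF assms(1) assms(5) r(2)])
  have z27: "C 0 0 b = 0" by (rule cop_g1[OF assms(1) r(3) r(2)])
  have z28: "C 0 y a = 0" by (rule cop_g1[OF assms(1) assms(6) r(1)])
  have z29: "C x 0 a = 0" by (rule cop_g2[OF assms(1) assms(5) r(1)])
  have z30: "C 0 0 a = 0" by (rule cop_g1[OF assms(1) r(3) r(1)])
  have z31: "C 0 1 b = 0" by (rule cop_g1[OF assms(1) r(4) r(2)])
  have z32: "C 0 1 a = 0" by (rule cop_g1[OF assms(1) r(4) r(1)])
  have z33: "C 1 0 b = 0" by (rule cop_g2[OF assms(1) r(4) r(2)])
  have z34: "C 1 0 a = 0" by (rule cop_g2[OF assms(1) r(4) r(1)])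
  have z35: "C 1 1 a = a" by (rule cop_m3[OF assms(1) r(1)])
  have z36: "C 1 1 b = b" by (rule cop_m3[OF assms(1) r(2)])
  show ?thesis using 1 2 3 assms z25 z26 z27 z28 z29 z30 z31 z32 z33 z34 z35 z36 by linarith
qed

lemma cop_lip:
  assumes "copula3 C" "x1 \<in> {0..1}" "x2 \<in> {0..1}" "x3 \<in> {0..1}" "y1 \<in> {0..1}" "y2 \<in> {0..1}" "y3 \<in> {0..1}"
  shows "\<bar>C x1 x2 x3 - C y1 y2 y3\<bar> \<le> \<bar>x1 - y1\<bar> + \<bar>x2 - y2\<bar> + \<bar>x3 - y3\<bar>"
proof -
  have a: "\<bar>C x1 x2 x3 - C y1 x2 x3\<bar> \<le> \<bar>x1 - y1\<bar>"
    using cop_lip1[OF assms(1), of x1 y1 x2 x3] cop_lip1[OF assms(1), of y1 x1 x2 x3] assms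
    by (cases "x1 \<le> y1") auto
  have b: "\<bar>C y1 x2 x3 - C y1 y2 x3\<bar> \<le> \<bar>x2 - y2\<bar>"
    using cop_lip2[OF assms(1), of x2 y2 y1 x3] cop_lip2[OF assms(1), of y2 x2 y1 x3] assms
    by (cases "x2 \<le> y2") auto
  have c: "\<bar>C y1 y2 x3 - C y1 y2 y3\<bar> \<le> \<bar>x3 - y3\<bar>"
    using cop_lip3[OF assms(1), of x3 y3 y1 y2] cop_lip3[OF assms(1), of y3 x3 y1 y2] assms
    by (cases "x3 \<le> y3") auto
  show ?thesis using a b c by linarith
qed



lemma sum3_if:
  fixes f :: "nat \<Rightarrow> nat \<Rightarrow> nat \<Rightarrow> real"
  assumes "a \<le> N" "b \<le> N" "c \<le> N"
  shows "(\<Sum>k<N. \<Sum>i<N. \<Sum>j<N. if k < c then (if i < a then (if j < b then f k i j else 0) else 0) else 0)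
    = (\<Sum>k<c. \<Sum>i<a. \<Sum>j<b. f k i j)"
proof -
  have 1: "(\<Sum>j<N. if k < c then (if i < a then (if j < b then f k i j else 0) else 0) else 0)
     = (if k < c then (if i < a then (\<Sum>j<b. f k i j) else 0) else 0)" for k i
    using sum_if_less[OF assms(2), of "f k i"] by auto
  have 2: "(\<Sum>i<N. if k < c then (if i < a then (\<Sum>j<b. f k i j) else 0) else 0)
     = (if k < c then (\<Sum>i<a. \<Sum>j<b. f k i j) else 0)" for k
    using sum_if_less[OF assms(1), of "\<lambda>i. \<Sum>j<b. f k i j"] by auto
  show ?thesis unfolding 1 2 by (rule sum_if_less[OF assms(3)])
qed

locale apx =
  fixes C :: "real \<Rightarrow> real \<Rightarrow> real \<Rightarrow> real" and n :: nat
  assumes cop: "copula3 C" and npos: "0 < n"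
begin

definition D :: "nat \<Rightarrow> nat \<Rightarrow> nat \<Rightarrow> real" where
  "D a b c = C (real a / real n) (real b / real n) (real c / real n)"

definition vol :: "nat \<Rightarrow> nat \<Rightarrow> nat \<Rightarrow> real" where
  "vol i j k = D (Suc i) (Suc j) (Suc k) - D i (Suc j) (Suc k) - D (Suc i) j (Suc k) - D (Suc i) (Suc j) k
     + D i j (Suc k) + D i (Suc j) k + D (Suc i) j k - D i j k"

lemma mem01: "a \<le> n \<Longrightarrow> real a / real n \<in> {0..1}"
  using npos by (auto simp: field_simps)

lemma D0: "b \<le> n \<Longrightarrow> c \<le> n \<Longrightarrow> D 0 b c = 0"
  and D0': "a \<le> n \<Longrightarrow> c \<le> n \<Longrightarrow> D a 0 c = 0"
  and D0'': "a \<le> n \<Longrightarrow> b \<le> n \<Longrightarrow> D a b 0 = 0"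
  unfolding D_def using cop_g1[OF cop] cop_g2[OF cop] cop_g3[OF cop] mem01 by auto

lemma Dm: "a \<le> n \<Longrightarrow> D a n n = real a / real n"
  and Dm': "a \<le> n \<Longrightarrow> D n a n = real a / real n"
  and Dm'': "a \<le> n \<Longrightarrow> D n n a = real a / real n"
  unfolding D_def using cop_m1[OF cop] cop_m2[OF cop] cop_m3[OF cop] mem01 npos by auto

lemma vol_nonneg: "i < n \<Longrightarrow> j < n \<Longrightarrow> k < n \<Longrightarrow> vol i j k \<ge> 0"
  unfolding vol_def D_def
  by (rule cop_inc[OF cop]) (use npos in \<open>auto simp: field_simps\<close>)

lemma T: assumes "a \<le> n" "b \<le> n" "c \<le> n"
  shows "(\<Sum>k<c. \<Sum>i<a. \<Sum>j<b. vol i j k) = D a b c"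
proof -
  define E where "E i k y = D (Suc i) y (Suc k) - D i y (Suc k) - D (Suc i) y k + D i y k" for i k y
  have 1: "(\<Sum>j<b. vol i j k) = E i k b" if "i < a" "k < c" for i k
  proof -
    have "(\<Sum>j<b. vol i j k) = (\<Sum>j<b. E i k (Suc j) - E i k j)"
      unfolding vol_def E_def by (simp add: algebra_simps)
    also have "\<dots> = E i k b - E i k 0" by (rule sum_lessThan_telescope)
    also have "E i k 0 = 0" unfolding E_def using that assms by (simp add: D0')
    finally show ?thesis by simp
  qed
  define F where "F k x = D x b (Suc k) - D x b k" for k x
  have 2: "(\<Sum>i<a. E i k b) = F k a" if "k < c" for k
  proof -
    have "(\<Sum>i<a. E i k b) = (\<Sum>i<a. F k (Suc i) - F k i)"
      unfolding E_def F_def by (simp add: algebra_simps)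
    also have "\<dots> = F k a - F k 0" by (rule sum_lessThan_telescope)
    also have "F k 0 = 0" unfolding F_def using that assms by (simp add: D0)
    finally show ?thesis by simp
  qed
  have "(\<Sum>k<c. \<Sum>i<a. \<Sum>j<b. vol i j k) = (\<Sum>k<c. F k a)"
    using 1 2 by simp
  also have "\<dots> = (\<Sum>k<c. D a b (Suc k) - D a b k)" unfolding F_def by simp
  also have "\<dots> = D a b c - D a b 0" by (rule sum_lessThan_telescope)
  finally show ?thesis using assms by (simp add: D0'')
qed


definition NN :: nat where "NN = n * (n * n)"
definition iq :: "nat \<Rightarrow> nat" where "iq q = (q div n) mod n"
definition jq :: "nat \<Rightarrow> nat" where "jq q = q mod n"
definition kq :: "nat \<Rightarrow> nat" where "kq q = q div (n * n)"

lemma iq_lt: "iq q < n" and jq_lt: "jq q < n"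
  unfolding iq_def jq_def using npos by auto

lemma kq_lt: "q < NN \<Longrightarrow> kq q < n"
  unfolding kq_def NN_def using npos by (simp add: div_less_iff_less_mult mult.commute)

lemma decode:
  assumes "i < n" "j < n"
  shows "kq (k * (n * n) + (i * n + j)) = k" "iq (k * (n * n) + (i * n + j)) = i"
    "jq (k * (n * n) + (i * n + j)) = j"
proof -
  have ij: "i * n + j < n * n"
  proof -
    have "i * n + j < i * n + n" using assms by simp
    also have "\<dots> = Suc i * n" by simp
    also have "\<dots> \<le> n * n" using assms by (intro mult_right_mono) auto
    finally show ?thesis .
  qed
  have nn: "n * n \<noteq> 0" using npos by simp
  have "(i * n + j + k * (n * n)) div (n * n) = k + (i * n + j) div (n * n)"
    using div_mult_self1[OF nn, of "i * n + j" k] by simp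
  then show "kq (k * (n * n) + (i * n + j)) = k" unfolding kq_def using ij by (simp add: add.commute)
  have e: "k * (n * n) + (i * n + j) = (k * n + i) * n + j" by (simp add: algebra_simps)
  have n0: "n \<noteq> 0" using npos by simp
  have "(j + (k * n + i) * n) div n = (k * n + i) + j div n"
    using div_mult_self1[OF n0, of j "k * n + i"] by simp
  then have "((k * n + i) * n + j) div n = k * n + i" using assms by (simp add: add.commute)
  moreover have "(i + k * n) mod n = i" using assms by simp
  ultimately show "iq (k * (n * n) + (i * n + j)) = i" unfolding iq_def e by (simp add: add.commute)
  show "jq (k * (n * n) + (i * n + j)) = j" unfolding jq_def e using assms by simp
qed

lemma prefix_sum:
  "(\<Sum>q<k * (n * n). f (kq q) (iq q) (jq q)) = (\<Sum>k'<k. \<Sum>i<n. \<Sum>j<n. f k' i j)"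
proof -
  have "(\<Sum>q<k * (n * n). f (kq q) (iq q) (jq q)) =
     (\<Sum>k'<k. \<Sum>r<n * n. f (kq (k' * (n * n) + r)) (iq (k' * (n * n) + r)) (jq (k' * (n * n) + r)))"
    by (rule sum_split_mult)
  also have "\<dots> = (\<Sum>k'<k. \<Sum>i<n. \<Sum>j<n. f (kq (k' * (n * n) + (i * n + j)))
      (iq (k' * (n * n) + (i * n + j))) (jq (k' * (n * n) + (i * n + j))))"
    by (simp only: sum_split_mult)
  also have "\<dots> = (\<Sum>k'<k. \<Sum>i<n. \<Sum>j<n. f k' i j)"
    by (intro sum.cong refl) (simp add: decode)
  finally show ?thesis .
qed

lemma reindex: "(\<Sum>q<NN. f (kq q) (iq q) (jq q)) = (\<Sum>k<n. \<Sum>i<n. \<Sum>j<n. f k i j)"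
  unfolding NN_def by (rule prefix_sum)

definition m :: "nat \<Rightarrow> real" where
  "m q = (if q < NN then vol (iq q) (jq q) (kq q) else 0)"
definition c :: "nat \<Rightarrow> real" where
  "c q = (\<Sum>r<q. m r)"

lemma m_nonneg: "m q \<ge> 0"
  unfolding m_def using vol_nonneg iq_lt jq_lt kq_lt by auto

lemma c_Suc: "c (Suc q) = c q + m q" unfolding c_def by simp
lemma c_0: "c 0 = 0" unfolding c_def by simp
lemma c_mono: "q \<le> r \<Longrightarrow> c q \<le> c r"
  unfolding c_def by (rule sum_mono2) (auto simp: m_nonneg)

lemma c_k: assumes "k \<le> n" shows "c (k * (n * n)) = real k / real n"
proof -
  have "c (k * (n * n)) = (\<Sum>q<k * (n * n). (\<lambda>k i j. vol i j k) (kq q) (iq q) (jq q))"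
    unfolding c_def
  proof (intro sum.cong refl)
    fix q assume "q \<in> {..<k * (n * n)}"
    then have "q < NN" using assms unfolding NN_def
      by (metis lessThan_iff less_le_trans mult_le_mono1)
    then show "m q = vol (iq q) (jq q) (kq q)" unfolding m_def by simp
  qed
  also have "\<dots> = (\<Sum>k'<k. \<Sum>i<n. \<Sum>j<n. vol i j k')" by (rule prefix_sum)
  also have "\<dots> = D n n k" using T[of n n k] assms by simp
  finally show ?thesis using Dm'' assms by simp
qed

lemma c_NN: "c NN = 1"
  using c_k[of n] npos unfolding NN_def by simp

lemma c_ge0: "c q \<ge> 0" using c_mono[of 0 q] c_0 by simp
lemma c_le1: "q \<le> NN \<Longrightarrow> c q \<le> 1" using c_mono[of q NN] c_NN by simp

lemma c_lower: "real (kq q) / real n \<le> c q" if "q < NN"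
proof -
  have "kq q * (n * n) \<le> q" unfolding kq_def by simp
  then have "c (kq q * (n * n)) \<le> c q" by (rule c_mono)
  then show ?thesis using c_k[of "kq q"] kq_lt[OF that] by simp
qed

lemma c_upper: "c (Suc q) \<le> real (Suc (kq q)) / real n" if "q < NN"
proof -
  have "Suc q \<le> Suc (kq q) * (n * n)" unfolding kq_def
    using dividend_less_times_div[of "n * n" q] npos by (simp add: algebra_simps)
  then have "c (Suc q) \<le> c (Suc (kq q) * (n * n))" by (rule c_mono)
  then show ?thesis using c_k[of "Suc (kq q)"] kq_lt[OF that] by simp
qed


definition gg :: "nat \<Rightarrow> real \<Rightarrow> real" where
  "gg i u = max 0 (min 1 (real n * u - real i))"
definition Lf :: "nat \<Rightarrow> real \<Rightarrow> real" where
  "Lf q v = max 0 (min v (c (Suc q)) - c q)"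
definition S :: "real \<Rightarrow> real \<Rightarrow> real \<Rightarrow> real" where
  "S u1 u2 v = (\<Sum>q<NN. Lf q v * gg (iq q) u1 * gg (jq q) u2)"

lemma gg_grid: "gg i (real a / real n) = (if i < a then 1 else 0)"
proof -
  have "real n * (real a / real n) = real a" using npos by simp
  then show ?thesis unfolding gg_def by auto
qed

lemma Lf_grid: assumes "q < NN" "k \<le> n"
  shows "Lf q (real k / real n) = (if kq q < k then m q else 0)"
proof (cases "kq q < k")
  case True
  then have "real (Suc (kq q)) / real n \<le> real k / real n"
    by (intro divide_right_mono) auto
  then have "c (Suc q) \<le> real k / real n" using c_upper[OF assms(1)] by linarith
  then show ?thesis using True c_Suc[of q] m_nonneg[of q] unfolding Lf_def by auto
next
  case False
  then have "real k / real n \<le> real (kq q) / real n"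
    by (intro divide_right_mono) auto
  then have "real k / real n \<le> c q" using c_lower[OF assms(1)] by linarith
  then show ?thesis using False unfolding Lf_def by auto
qed

lemma S_grid: assumes "a \<le> n" "b \<le> n" "k \<le> n"
  shows "S (real a / real n) (real b / real n) (real k / real n) = D a b k"
proof -
  have "S (real a / real n) (real b / real n) (real k / real n) =
     (\<Sum>q<NN. (\<lambda>k' i j. if k' < k then (if i < a then (if j < b then vol i j k' else 0) else 0) else 0)
        (kq q) (iq q) (jq q))"
    unfolding S_def
  proof (intro sum.cong refl)
    fix q assume "q \<in> {..<NN}"
    then have q: "q < NN" by simp
    show "Lf q (real k / real n) * gg (iq q) (real a / real n) * gg (jq q) (real b / real n) =
      (if kq q < k then (if iq q < a then (if jq q < b then vol (iq q) (jq q) (kq q) else 0) else 0) else 0)"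
      using q assms by (simp add: Lf_grid gg_grid m_def)
  qed
  also have "\<dots> = (\<Sum>k'<n. \<Sum>i<n. \<Sum>j<n. if k' < k then (if i < a then (if j < b then vol i j k' else 0) else 0) else 0)"
    by (rule reindex)
  also have "\<dots> = (\<Sum>k'<k. \<Sum>i<a. \<Sum>j<b. vol i j k')"
    by (rule sum3_if) (use assms in auto)
  also have "\<dots> = D a b k" using T assms by simp
  finally show ?thesis .
qed

lemma gg_0: "gg i 0 = 0" unfolding gg_def by simp
lemma Lf_0: "Lf q 0 = 0" unfolding Lf_def using c_ge0[of q] c_ge0[of "Suc q"] by simp
lemma gg_1: "i < n \<Longrightarrow> gg i 1 = 1" unfolding gg_def by simp
lemma Lf_1: "q < NN \<Longrightarrow> Lf q 1 = m q"
  unfolding Lf_def using c_le1[of "Suc q"] c_Suc[of q] m_nonneg[of q] by simp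
lemma gg_mono: "u \<le> u' \<Longrightarrow> gg i u \<le> gg i u'"
  unfolding gg_def using mult_left_mono[of u u' "real n"] by (auto intro!: max.mono min.mono)
lemma Lf_mono: "v \<le> v' \<Longrightarrow> Lf q v \<le> Lf q v'"
  unfolding Lf_def by (auto intro!: max.mono min.mono)
lemma Lf_tele: "0 \<le> x \<Longrightarrow> Lf q x = min x (c (Suc q)) - min x (c q)"
  unfolding Lf_def using c_Suc[of q] m_nonneg[of q] c_ge0[of q] by (auto simp: min_def max_def)

lemma colsum: assumes "i < n" shows "(\<Sum>k<n. \<Sum>j<n. vol i j k) = 1 / real n"
proof -
  have "(\<Sum>k<n. \<Sum>i'<Suc i. \<Sum>j<n. vol i' j k) = (\<Sum>k<n. \<Sum>i'<i. \<Sum>j<n. vol i' j k) + (\<Sum>k<n. \<Sum>j<n. vol i j k)"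
    by (simp add: sum.distrib)
  moreover have "(\<Sum>k<n. \<Sum>i'<Suc i. \<Sum>j<n. vol i' j k) = D (Suc i) n n" by (rule T) (use assms in auto)
  moreover have "(\<Sum>k<n. \<Sum>i'<i. \<Sum>j<n. vol i' j k) = D i n n" by (rule T) (use assms in auto)
  ultimately have "(\<Sum>k<n. \<Sum>j<n. vol i j k) = D (Suc i) n n - D i n n" by simp
  also have "\<dots> = 1 / real n" using assms Dm[of i] Dm[of "Suc i"] by (simp add: diff_divide_distrib[symmetric])
  finally show ?thesis .
qed

lemma rowsum: assumes "j < n" shows "(\<Sum>k<n. \<Sum>i<n. vol i j k) = 1 / real n"
proof -
  have "(\<Sum>k<n. \<Sum>i<n. \<Sum>j'<Suc j. vol i j' k) = (\<Sum>k<n. \<Sum>i<n. \<Sum>j'<j. vol i j' k) + (\<Sum>k<n. \<Sum>i<n. vol i j k)"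
    by (simp add: sum.distrib)
  moreover have "(\<Sum>k<n. \<Sum>i<n. \<Sum>j'<Suc j. vol i j' k) = D n (Suc j) n" by (rule T) (use assms in auto)
  moreover have "(\<Sum>k<n. \<Sum>i<n. \<Sum>j'<j. vol i j' k) = D n j n" by (rule T) (use assms in auto)
  ultimately have "(\<Sum>k<n. \<Sum>i<n. vol i j k) = D n (Suc j) n - D n j n" by simp
  also have "\<dots> = 1 / real n" using assms Dm'[of j] Dm'[of "Suc j"] by (simp add: diff_divide_distrib[symmetric])
  finally show ?thesis .
qed

lemma gg_sum: "x \<in> {0..1} \<Longrightarrow> (\<Sum>i<n. gg i x) = real n * x"
  unfolding gg_def using sum_clamp[of "real n * x" n] npos
  by (auto simp: mult_le_cancel_left1)

lemma S_m1: assumes "x \<in> {0..1}" shows "S x 1 1 = x"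
proof -
  have "S x 1 1 = (\<Sum>q<NN. (\<lambda>k i j. vol i j k * gg i x) (kq q) (iq q) (jq q))"
    unfolding S_def by (intro sum.cong refl) (simp add: Lf_1 gg_1 jq_lt m_def)
  also have "\<dots> = (\<Sum>k<n. \<Sum>i<n. \<Sum>j<n. vol i j k * gg i x)" by (rule reindex)
  also have "\<dots> = (\<Sum>i<n. \<Sum>k<n. gg i x * (\<Sum>j<n. vol i j k))"
    by (subst sum.swap) (simp add: sum_distrib_left mult.commute)
  also have "\<dots> = (\<Sum>i<n. gg i x * (1 / real n))"
    by (intro sum.cong refl) (simp add: sum_distrib_left[symmetric] colsum)
  also have "\<dots> = (\<Sum>i<n. gg i x) / real n" by (simp add: sum_divide_distrib)
  also have "\<dots> = x" using gg_sum[OF assms] npos by simp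
  finally show ?thesis .
qed

lemma S_m2: assumes "x \<in> {0..1}" shows "S 1 x 1 = x"
proof -
  have "S 1 x 1 = (\<Sum>q<NN. (\<lambda>k i j. vol i j k * gg j x) (kq q) (iq q) (jq q))"
    unfolding S_def by (intro sum.cong refl) (simp add: Lf_1 gg_1 iq_lt m_def)
  also have "\<dots> = (\<Sum>k<n. \<Sum>i<n. \<Sum>j<n. vol i j k * gg j x)" by (rule reindex)
  also have "\<dots> = (\<Sum>k<n. \<Sum>j<n. \<Sum>i<n. vol i j k * gg j x)"
    by (rule sum.cong[OF refl]) (rule sum.swap)
  also have "\<dots> = (\<Sum>j<n. \<Sum>k<n. gg j x * (\<Sum>i<n. vol i j k))"
    by (subst sum.swap) (simp add: sum_distrib_left mult.commute)
  also have "\<dots> = (\<Sum>j<n. gg j x * (1 / real n))"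
    by (intro sum.cong refl) (simp add: sum_distrib_left[symmetric] rowsum)
  also have "\<dots> = (\<Sum>i<n. gg i x) / real n" by (simp add: sum_divide_distrib)
  also have "\<dots> = x" using gg_sum[OF assms] npos by simp
  finally show ?thesis .
qed

lemma S_m3: assumes "x \<in> {0..1}" shows "S 1 1 x = x"
proof -
  have "S 1 1 x = (\<Sum>q<NN. min x (c (Suc q)) - min x (c q))"
    unfolding S_def using assms by (intro sum.cong refl) (simp add: gg_1 iq_lt jq_lt Lf_tele)
  also have "\<dots> = min x (c NN) - min x (c 0)" by (rule sum_lessThan_telescope)
  finally show ?thesis using assms c_NN c_0 by simp
qed

lemma S_copula3: "copula3 S"
  unfolding copula3_def
proof (intro conjI ballI allI impI)
  fix x y :: real
  show "S 0 x y = 0" "S x 0 y = 0" "S x y 0 = 0" unfolding S_def by (simp_all add: gg_0 Lf_0)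
next
  fix x :: real assume "x \<in> {0..1}"
  then show "S x 1 1 = x" "S 1 x 1 = x" "S 1 1 x = x" using S_m1 S_m2 S_m3 by auto
next
  fix a1 b1 a2 b2 a3 b3 :: real
  assume h: "0 \<le> a1 \<and> a1 \<le> b1 \<and> b1 \<le> 1 \<and> 0 \<le> a2 \<and> a2 \<le> b2 \<and> b2 \<le> 1 \<and> 0 \<le> a3 \<and> a3 \<le> b3 \<and> b3 \<le> 1"
  have "S b1 b2 b3 - S a1 b2 b3 - S b1 a2 b3 - S b1 b2 a3 + S a1 a2 b3 + S a1 b2 a3 + S b1 a2 a3 - S a1 a2 a3
     = (\<Sum>q<NN. (Lf q b3 - Lf q a3) * (gg (iq q) b1 - gg (iq q) a1) * (gg (jq q) b2 - gg (jq q) a2))"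
    unfolding S_def sum_subtractf[symmetric] sum.distrib[symmetric]
    by (intro sum.cong refl) (simp add: algebra_simps)
  also have "\<dots> \<ge> 0"
    using h by (intro sum_nonneg mult_nonneg_nonneg) (auto simp: gg_mono Lf_mono)
  finally show "S b1 b2 b3 - S a1 b2 b3 - S b1 a2 b3 - S b1 b2 a3 + S a1 a2 b3 + S a1 b2 a3 + S b1 a2 a3 - S a1 a2 a3 \<ge> 0" .
qed


definition UU :: "nat \<Rightarrow> real measure" where
  "UU i = uniform_measure lborel {real i / real n .. (real i + 1) / real n}"

lemma UU_emeasure: "emeasure lborel {real i / real n .. (real i + 1) / real n} = ennreal (1 / real n)"
  using npos by (simp add: field_simps diff_divide_distrib[symmetric])

lemma meas_UU: "measure (UU i) {0..u} = gg i u"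
proof -
  have np: "real n > 0" using npos by simp
  define a where "a = real i / real n"
  define b where "b = (real i + 1) / real n"
  have ab: "b - a = 1 / real n" unfolding a_def b_def using np by (simp add: field_simps)
  have a0: "a \<ge> 0" unfolding a_def by simp
  have "1 / real n > 0" using np by simp
  then have "a \<le> b" using ab by linarith
  have "measure (UU i) {0..u} = measure lborel ({a..b} \<inter> {0..u}) / measure lborel {a..b}"
    unfolding UU_def a_def b_def using np
    by (subst measure_uniform_measure) (auto simp: field_simps)
  also have "{a..b} \<inter> {0..u} = {a..min b u}" using a0 by auto
  also have "measure lborel {a..b} = 1 / real n" using ab np \<open>a \<le> b\<close> by simp
  finally have *: "measure (UU i) {0..u} = real n * (if a \<le> min b u then min b u - a else 0)"
    by simp
  have eq: "real n * (if a \<le> min b u then min b u - a else 0) = gg i u"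
  proof (cases "u \<le> a")
    case True
    then show ?thesis using np unfolding a_def b_def by (auto simp: gg_def field_simps min_def max_def)
  next
    case False
    then show ?thesis using np unfolding a_def b_def by (auto simp: gg_def field_simps min_def max_def)
  qed
  show ?thesis using * eq by simp
qed

lemma UU_prob: "prob_space (UU i)"
  unfolding UU_def by (rule prob_space_uniform_measure) (use npos UU_emeasure in auto)

lemma UU_sets: "sets (UU i) = sets borel"
  unfolding UU_def by simp

definition U :: "nat \<Rightarrow> (real \<times> real) measure" where
  "U q = UU (iq q) \<Otimes>\<^sub>M UU (jq q)"

lemma U_space: "U q \<in> space (prob_algebra borel)"
proof -
  have "sets (U q) = sets (borel \<Otimes>\<^sub>M borel)"
    unfolding U_def by (rule sets_pair_measure_cong) (simp_all add: UU_sets)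
  also have "(borel \<Otimes>\<^sub>M borel) = (borel :: (real \<times> real) measure)" by (rule borel_prod)
  finally have "sets (U q) = sets borel" .
  moreover have "prob_space (U q)" unfolding U_def by (intro prob_space_pair UU_prob)
  ultimately show ?thesis by (simp add: space_prob_algebra)
qed

lemma U_emeasure_times:
  assumes "A \<in> sets borel" "B \<in> sets borel"
  shows "emeasure (U q) (A \<times> B) = emeasure (UU (iq q)) A * emeasure (UU (jq q)) B"
proof -
  interpret P: prob_space "UU (jq q)" by (rule UU_prob)
  show ?thesis unfolding U_def
    by (rule P.emeasure_pair_measure_Times) (use assms in \<open>simp_all add: UU_sets\<close>)
qed

lemma U_measure_times:
  assumes "A \<in> sets borel" "B \<in> sets borel"
  shows "measure (U q) (A \<times> B) = measure (UU (iq q)) A * measure (UU (jq q)) B"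
  using U_emeasure_times[OF assms, of q] unfolding measure_def by (simp add: enn2real_mult)

lemma U_box: "measure (U q) ({0..u1} \<times> {0..u2}) = gg (iq q) u1 * gg (jq q) u2"
  by (simp add: U_measure_times meas_UU)

lemma U_unit: "emeasure (U q) ({0..1} \<times> {0..1}) = 1"
proof -
  interpret P1: prob_space "UU (iq q)" by (rule UU_prob)
  interpret P2: prob_space "UU (jq q)" by (rule UU_prob)
  have "emeasure (UU (iq q)) {0..1} = 1" using P1.emeasure_eq_measure meas_UU gg_1 iq_lt by simp
  moreover have "emeasure (UU (jq q)) {0..1} = 1" using P2.emeasure_eq_measure meas_UU gg_1 jq_lt by simp
  ultimately show ?thesis by (simp add: U_emeasure_times)
qed

primrec Kf :: "nat \<Rightarrow> real \<Rightarrow> (real \<times> real) measure" where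
  "Kf 0 t = U 0"
| "Kf (Suc r) t = (if c (Suc r) \<le> t then U (Suc r) else Kf r t)"

lemma Kf_ex: "\<exists>q. Kf r t = U q"
  by (induction r) auto

lemma Kf_meas: "Kf r \<in> borel \<rightarrow>\<^sub>M prob_algebra borel"
proof (induction r)
  case 0
  show ?case by (simp add: measurable_const U_space)
next
  case (Suc r)
  have "(\<lambda>t. if c (Suc r) \<le> t then U (Suc r) else Kf r t) \<in> borel \<rightarrow>\<^sub>M prob_algebra borel"
    by (rule measurable_If) (use Suc in \<open>simp_all add: measurable_const U_space\<close>)
  then show ?case by (simp add: fun_eq_iff)
qed

lemma Kf_val: "q \<le> R \<Longrightarrow> c q \<le> t \<Longrightarrow> (\<forall>r. q < r \<and> r \<le> R \<longrightarrow> t < c r) \<Longrightarrow> Kf R t = U q"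
proof (induction R)
  case 0 then show ?case by simp
next
  case (Suc R)
  show ?case
  proof (cases "q = Suc R")
    case True then show ?thesis using Suc by simp
  next
    case False
    then have "q \<le> R" using Suc by simp
    moreover have "q < Suc R" using Suc.prems False by simp
    then have "\<not> c (Suc R) \<le> t" using Suc.prems(3) by auto
    ultimately show ?thesis using Suc by simp
  qed
qed

lemma locate: "c 0 \<le> t \<Longrightarrow> t < c N \<Longrightarrow> \<exists>q<N. c q \<le> t \<and> t < c (Suc q)"
proof (induction N)
  case 0 then show ?case by simp
next
  case (Suc N)
  show ?case
  proof (cases "c N \<le> t")
    case True then show ?thesis using Suc by auto
  next
    case False then show ?thesis using Suc by (metis less_Suc_eq not_le)
  qed
qed

definition K :: "real \<Rightarrow> (real \<times> real) measure" where "K = Kf (NN - 1)"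

lemma NN_pos: "NN > 0" unfolding NN_def using npos by simp

lemma K_val: assumes "q < NN" "c q \<le> t" "t < c (Suc q)" shows "K t = U q"
  unfolding K_def
proof (rule Kf_val)
  show "q \<le> NN - 1" using assms by simp
  show "c q \<le> t" by fact
  show "\<forall>r. q < r \<and> r \<le> NN - 1 \<longrightarrow> t < c r"
    using assms c_mono by (meson Suc_leI less_le_trans)
qed

lemma K_ex: "\<exists>q. K t = U q" unfolding K_def by (rule Kf_ex)

lemma K_meas: "K \<in> borel \<rightarrow>\<^sub>M prob_algebra borel" unfolding K_def by (rule Kf_meas)

lemma uniq: assumes "q < NN" "q' < NN" "c q \<le> t" "t < c (Suc q)" "c q' \<le> t" "t < c (Suc q')"
  shows "q = q'"
proof (rule ccontr)
  assume "q \<noteq> q'"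
  then consider "Suc q \<le> q'" | "Suc q' \<le> q" by linarith
  then show False
  proof cases
    case 1 then show False using c_mono[OF 1] assms by linarith
  next
    case 2 then show False using c_mono[OF 2] assms by linarith
  qed
qed

lemma meas_int: assumes "0 \<le> a" "a \<le> b" "0 \<le> v"
  shows "measure lborel ({0..v} \<inter> {a..<b}) = max 0 (min v b - a)"
proof (cases "v < b")
  case True
  then have "{0..v} \<inter> {a..<b} = {a..v}" using assms by auto
  then show ?thesis using True by auto
next
  case False
  then have "{0..v} \<inter> {a..<b} = {a..<b}" using assms by auto
  then show ?thesis using False assms by auto
qed

lemma kernel_integral:
  assumes "u1 \<in> {0..1}" "u2 \<in> {0..1}" "v \<in> {0..1}"
  shows "(LINT t:{0..v}|lborel. measure (K t) ({0..u1} \<times> {0..u2})) = S u1 u2 v"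
proof -
  define G where "G q = gg (iq q) u1 * gg (jq q) u2" for q
  define I where "I q = {c q..<c (Suc q)}" for q
  define h where "h t = measure (K t) ({0..u1} \<times> {0..u2})" for t
  have pw: "indicator {0..v} t * h t = (\<Sum>q<NN. indicator ({0..v} \<inter> I q) t * G q)" if "t \<noteq> 1" for t
  proof (cases "t \<in> {0..v}")
    case False
    then have "indicator ({0..v} \<inter> I q) t = (0::real)" for q by (auto simp: indicator_def)
    then show ?thesis using False by simp
  next
    case True
    then have t01: "0 \<le> t" "t < 1" using assms that by auto
    obtain q0 where q0: "q0 < NN" "c q0 \<le> t" "t < c (Suc q0)"
      using locate[of t NN] t01 c_0 c_NN by auto
    have "K t = U q0" using K_val q0 by simp
    then have "h t = G q0" unfolding h_def G_def by (simp add: U_box)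
    have ind: "(indicator ({0..v} \<inter> I q) t :: real) = (if q = q0 then 1 else 0)" if "q < NN" for q
    proof (cases "q = q0")
      case True
      then show ?thesis using \<open>t \<in> {0..v}\<close> q0 by (simp add: I_def indicator_def)
    next
      case False
      have "t \<notin> I q"
      proof
        assume "t \<in> I q"
        then have "c q \<le> t" "t < c (Suc q)" by (auto simp: I_def)
        then show False using uniq[OF that q0(1) _ _ q0(2) q0(3)] False by blast
      qed
      then show ?thesis using False by (simp add: indicator_def)
    qed
    have "(\<Sum>q<NN. indicator ({0..v} \<inter> I q) t * G q) = (\<Sum>q<NN. if q = q0 then G q else 0)"
    proof (intro sum.cong refl)
      fix q assume "q \<in> {..<NN}"
      then show "indicator ({0..v} \<inter> I q) t * G q = (if q = q0 then G q else 0)" using ind[of q] by simp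
    qed
    also have "\<dots> = G q0" using q0(1) by simp
    finally show ?thesis using True \<open>h t = G q0\<close> by simp
  qed
  have hm: "h \<in> borel_measurable borel"
    unfolding h_def
    by (rule measure_measurable_prob_algebra2[OF _ K_meas])
       (simp, intro pair_measureI borel_closed closed_Times closed_atLeastAtMost, simp_all)
  have fin: "emeasure lborel ({0..v} \<inter> {c q..<c (Suc q)}) < \<top>" for q
  proof -
    have "emeasure lborel ({0..v} \<inter> {c q..<c (Suc q)}) \<le> emeasure lborel {0..v}"
      by (rule emeasure_mono) auto
    also have "\<dots> = ennreal v" using assms by simp
    also have "\<dots> < \<top>" by simp
    finally show ?thesis .
  qed
  have "(LINT t:{0..v}|lborel. h t) = (\<integral>t. indicator {0..v} t * h t \<partial>lborel)"
    by (simp add: set_lebesgue_integral_def)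
  also have "\<dots> = (\<integral>t. (\<Sum>q<NN. indicator ({0..v} \<inter> I q) t * G q) \<partial>lborel)"
  proof (rule integral_cong_AE)
    show "(\<lambda>t. indicator {0..v} t * h t) \<in> borel_measurable lborel" using hm by simp
    show "(\<lambda>t. \<Sum>q<NN. indicator ({0..v} \<inter> I q) t * G q) \<in> borel_measurable lborel"
      unfolding I_def by measurable
    show "AE t in lborel. indicator {0..v} t * h t = (\<Sum>q<NN. indicator ({0..v} \<inter> I q) t * G q)"
      using AE_lborel_singleton[of "1::real"] by eventually_elim (rule pw)
  qed
  also have "\<dots> = (\<Sum>q<NN. \<integral>t. indicator ({0..v} \<inter> I q) t * G q \<partial>lborel)"
    by (rule Bochner_Integration.integral_sum)
       (auto simp: I_def fin integrable_indicator_iff intro!: integrable_mult_left_iff[THEN iffD2])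
  also have "\<dots> = (\<Sum>q<NN. measure lborel ({0..v} \<inter> I q) * G q)"
    by simp
  also have "\<dots> = S u1 u2 v"
    unfolding S_def G_def I_def Lf_def
    using meas_int c_ge0 c_Suc m_nonneg assms by (intro sum.cong refl) (simp add: algebra_simps)
  finally show ?thesis unfolding h_def .
qed


lemma F13_K: "K t = U q \<Longrightarrow> F13 K t = gg (iq q)"
  unfolding F13_def by (rule ext) (simp add: U_box gg_1 jq_lt)
lemma F23_K: "K t = U q \<Longrightarrow> F23 K t = gg (jq q)"
  unfolding F23_def by (rule ext) (simp add: U_box gg_1 iq_lt)

lemma gg_cont: "continuous_on UNIV (gg i)"
  unfolding gg_def by (intro continuous_intros)

lemma S_cond_kernel: "cond_kernel S K"
  unfolding cond_kernel_def
proof (intro conjI allI ballI)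
  show "K \<in> borel \<rightarrow>\<^sub>M prob_algebra borel" by (rule K_meas)
next
  fix t
  obtain q where "K t = U q" using K_ex by blast
  then show "emeasure (K t) ({0..1} \<times> {0..1}) = 1" by (simp add: U_unit)
next
  fix u1 u2 v :: real assume "u1 \<in> {0..1}" "u2 \<in> {0..1}" "v \<in> {0..1}"
  then show "S u1 u2 v = (LINT t:{0..v}|lborel. measure (K t) ({0..u1} \<times> {0..u2}))"
    using kernel_integral by simp
qed

lemma S_simplified: "simplified S"
  unfolding simplified_def
proof (intro exI conjI)
  show "cond_kernel S K" by (rule S_cond_kernel)
  show "copula2 (\<lambda>a b. a * b)"
    unfolding copula2_def
  proof (intro conjI ballI allI impI)
    fix a1 b1 a2 b2 :: real
    assume h: "0 \<le> a1 \<and> a1 \<le> b1 \<and> b1 \<le> 1 \<and> 0 \<le> a2 \<and> a2 \<le> b2 \<and> b2 \<le> 1"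
    have "b1 * b2 - a1 * b2 - b1 * a2 + a1 * a2 = (b1 - a1) * (b2 - a2)" by (simp add: algebra_simps)
    also have "\<dots> \<ge> 0" using h by simp
    finally show "b1 * b2 - a1 * b2 - b1 * a2 + a1 * a2 \<ge> 0" .
  qed auto
  show "\<forall>u1\<in>{0..1}. \<forall>u2\<in>{0..1}. \<forall>v\<in>{0..1}.
        S u1 u2 v = (LINT t:{0..v}|lborel. F13 K t u1 * F23 K t u2)"
  proof (intro ballI)
    fix u1 u2 v :: real assume h: "u1 \<in> {0..1}" "u2 \<in> {0..1}" "v \<in> {0..1}"
    have "(\<lambda>t. F13 K t u1 * F23 K t u2) = (\<lambda>t. measure (K t) ({0..u1} \<times> {0..u2}))"
    proof
      fix t
      obtain q where q: "K t = U q" using K_ex by blast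
      show "F13 K t u1 * F23 K t u2 = measure (K t) ({0..u1} \<times> {0..u2})"
        using F13_K[OF q] F23_K[OF q] q by (simp add: U_box)
    qed
    then show "S u1 u2 v = (LINT t:{0..v}|lborel. F13 K t u1 * F23 K t u2)"
      using kernel_integral[OF h] by simp
  qed
  show "AE t in lborel. t \<in> {0..1} \<longrightarrow> continuous_on UNIV (F13 K t) \<and> continuous_on UNIV (F23 K t)"
  proof (rule AE_I2, intro impI conjI)
    fix t
    obtain q where q: "K t = U q" using K_ex by blast
    show "continuous_on UNIV (F13 K t)" using F13_K[OF q] gg_cont by simp
    show "continuous_on UNIV (F23 K t)" using F23_K[OF q] gg_cont by simp
  qed
qed

lemma near: assumes "y \<in> {0..1}" shows "\<exists>a\<le>n. \<bar>y - real a / real n\<bar> \<le> 1 / real n"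
proof -
  have np: "real n > 0" using npos by simp
  define a where "a = nat \<lfloor>real n * y\<rfloor>"
  have f0: "0 \<le> \<lfloor>real n * y\<rfloor>" using assms np by simp
  then have ra: "real a = of_int \<lfloor>real n * y\<rfloor>" unfolding a_def by simp
  have 1: "real a \<le> real n * y" using ra by linarith
  have 2: "real n * y < real a + 1" using ra by linarith
  have "real n * y \<le> real n" using assms np by simp
  then have "real a \<le> real n" using 1 by linarith
  then have an: "a \<le> n" by simp
  have "\<bar>y - real a / real n\<bar> = \<bar>real n * y - real a\<bar> / real n"
    using np by (simp add: field_simps)
  also have "\<dots> \<le> 1 / real n" using 1 2 np by (intro divide_right_mono) auto
  finally show ?thesis using an by blast
qed

lemma d_inf_bound: "d_inf C S \<le> 6 / real n"
  unfolding d_inf_def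
proof (rule cSUP_least)
  show "{0..1} \<times> {0..1} \<times> {0..1} \<noteq> ({} :: (real \<times> real \<times> real) set)" by auto
next
  fix x :: "real \<times> real \<times> real"
  assume "x \<in> {0..1} \<times> {0..1} \<times> {0..1}"
  then obtain x1 x2 x3 where x: "x = (x1, x2, x3)" "x1 \<in> {0..1}" "x2 \<in> {0..1}" "x3 \<in> {0..1}"
    by auto
  obtain a where a: "a \<le> n" "\<bar>x1 - real a / real n\<bar> \<le> 1 / real n" using near[OF x(2)] by blast
  obtain b where b: "b \<le> n" "\<bar>x2 - real b / real n\<bar> \<le> 1 / real n" using near[OF x(3)] by blast
  obtain k where k: "k \<le> n" "\<bar>x3 - real k / real n\<bar> \<le> 1 / real n" using near[OF x(4)] by blast
  have ga: "real a / real n \<in> {0..1}" using mem01[OF a(1)] .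
  have gb: "real b / real n \<in> {0..1}" using mem01[OF b(1)] .
  have gk: "real k / real n \<in> {0..1}" using mem01[OF k(1)] .
  have e1: "\<bar>C x1 x2 x3 - C (real a / real n) (real b / real n) (real k / real n)\<bar> \<le> 3 / real n"
    using cop_lip[OF cop x(2,3,4) ga gb gk] a b k by simp
  have e2: "\<bar>S x1 x2 x3 - S (real a / real n) (real b / real n) (real k / real n)\<bar> \<le> 3 / real n"
    using cop_lip[OF S_copula3 x(2,3,4) ga gb gk] a b k by simp
  have e3: "C (real a / real n) (real b / real n) (real k / real n) = S (real a / real n) (real b / real n) (real k / real n)"
    using S_grid[OF a(1) b(1) k(1)] unfolding D_def by simp
  show "\<bar>C (fst x) (fst (snd x)) (snd (snd x)) - S (fst x) (fst (snd x)) (snd (snd x))\<bar> \<le> 6 / real n"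
    using e1 e2 e3 x(1) by simp
qed

end

theorem corollary3p7:
  shows "\<forall>C. copula3 C \<longrightarrow> (\<forall>\<epsilon>>0. \<exists>S. copula3 S \<and> simplified S \<and> d_inf C S < \<epsilon>)"
proof (intro allI impI)
  fix C :: "real \<Rightarrow> real \<Rightarrow> real \<Rightarrow> real" and \<epsilon> :: real
  assume C: "copula3 C" and e: "\<epsilon> > 0"
  obtain n :: nat where n: "6 / \<epsilon> < real n" using reals_Archimedean2 by blast
  have "6 / \<epsilon> > 0" using e by simp
  then have npos: "0 < n" using n by linarith
  interpret A: apx C n using C npos by unfold_locales
  have "6 < real n * \<epsilon>" using n e by (simp add: field_simps)
  then have "6 / real n < \<epsilon>" using npos by (simp add: field_simps)
  then show "\<exists>S. copula3 S \<and> simplified S \<and> d_inf C S < \<epsilon>"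
    using A.S_copula3 A.S_simplified A.d_inf_bound by (intro exI[of _ A.S]) auto
qed

end
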